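(* Let $K$ be a field and let $R\in\mathfrak R_K$ be of Loewy length $\sigma+1$ and top layer dimension $n$. Then there is a $K$-algebra direct product decomposition $R=R_0\boxplus\cdots\boxplus R_{n-1}$ where for each $i<n$, $R_i\in\mathfrak R_K$ has Loewy length $\sigma+1$ and top layer dimension $1$.
   Context: Socle sequence of a ring: $S_0=0$, $S_{\alpha+1}/S_\alpha=\mathrm{Soc}(R/S_\alpha)$, unions at limits; semiartinian with Loewy length $\sigma+1$ means $S_{\sigma+1}=R$ and $S_\sigma\neq R$; layers $L_\alpha=S_{\alpha+1}/S_\alpha$. $K^{(\lambda)}$ is the direct sum of $\lambda$ copies of $K$ as a $K$-algebra without unit. $\mathfrak R_K$ is the class of commutative von Neumann regular semiartinian $K$-algebras $R$ of Loewy length $\sigma+1$ such that for each $\alpha\le\sigma$ there is a cardinal $\lambda_\alpha>0$ and a $K$-linear isomorphism of $K$-algebras without unit $L_\alpha\cong K^{(\lambda_\alpha)}$; the finite number $\lambda_\sigma$ is the top layer dimension. $\boxplus$ denotes ring direct product. *)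

theory Defs
  imports Main
begin

text \<open>A (unital, commutative) ring is a carrier A :: 'a set closed under the ring
  operations of 'a, with its own unit u.  A K-algebra structure is given by a
  ring homomorphism phi : K -> 'a, the scalar action on A being k.x = phi k * x.\<close>

definition ring_hom_K :: "('k::field \<Rightarrow> 'a::comm_ring_1) \<Rightarrow> bool" where
  "ring_hom_K phi \<longleftrightarrow> (\<forall>k l. phi (k + l) = phi k + phi l) \<and>
     (\<forall>k l. phi (k * l) = phi k * phi l) \<and> phi 1 = 1"

definition unital_K_subalgebra ::
  "('k::field \<Rightarrow> 'a::comm_ring_1) \<Rightarrow> 'a set \<Rightarrow> 'a \<Rightarrow> bool" where
  "unital_K_subalgebra phi A u \<longleftrightarrow> 0 \<in> A \<and> u \<in> A \<and>
     (\<forall>x\<in>A. \<forall>y\<in>A. x + y \<in> A \<and> x * y \<in> A) \<and> (\<forall>x\<in>A. - x \<in> A) \<and>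
     (\<forall>x\<in>A. u * x = x) \<and> (\<forall>k. \<forall>x\<in>A. phi k * x \<in> A)"

definition ideal_in :: "'a::comm_ring_1 set \<Rightarrow> 'a set \<Rightarrow> bool" where
  "ideal_in A I \<longleftrightarrow> I \<subseteq> A \<and> 0 \<in> I \<and> (\<forall>x\<in>I. \<forall>y\<in>I. x + y \<in> I) \<and>
     (\<forall>x\<in>I. - x \<in> I) \<and> (\<forall>a\<in>A. \<forall>x\<in>I. a * x \<in> I)"

text \<open>J/I is a minimal (nonzero) ideal, i.e. a simple submodule, of A/I.\<close>
definition minimal_over :: "'a::comm_ring_1 set \<Rightarrow> 'a set \<Rightarrow> 'a set \<Rightarrow> bool" where
  "minimal_over A I J \<longleftrightarrow> ideal_in A J \<and> I \<subset> J \<and>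
     (\<forall>J'. ideal_in A J' \<and> I \<subset> J' \<and> J' \<subseteq> J \<longrightarrow> J' = J)"

text \<open>Preimage in A of Soc(A/I): the ideal generated by I and all J with J/I simple.\<close>
definition soc_succ :: "'a::comm_ring_1 set \<Rightarrow> 'a set \<Rightarrow> 'a set" where
  "soc_succ A I = \<Inter>{J'. ideal_in A J' \<and> I \<subseteq> J' \<and> (\<forall>J. minimal_over A I J \<longrightarrow> J \<subseteq> J')}"

text \<open>The members of the socle sequence S_alpha (alpha ranging over all ordinals):
  the smallest family containing 0 = S_0, closed under S |-> S_{+1}
  and under unions (limit steps).\<close>
inductive_set socle_ideals :: "'a::comm_ring_1 set \<Rightarrow> 'a set set" for A where
  succ: "I \<in> socle_ideals A \<Longrightarrow> soc_succ A I \<in> socle_ideals A"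
| lim: "(\<forall>I\<in>C. I \<in> socle_ideals A) \<Longrightarrow> {0} \<union> \<Union>C \<in> socle_ideals A"

definition fin_fun :: "'a set \<Rightarrow> ('a \<Rightarrow> 'k::field) set" where
  "fin_fun Lam = {f. (\<forall>x. x \<notin> Lam \<longrightarrow> f x = 0) \<and> finite {x. f x \<noteq> 0}}"

text \<open>J/I is isomorphic, as a K-algebra without unit, to K^(Lambda):
  there is a surjective K-linear multiplicative additive map J -> K^(Lambda)
  with kernel I (first isomorphism theorem form).\<close>
definition layer_iso ::
  "('k::field \<Rightarrow> 'a::comm_ring_1) \<Rightarrow> 'a set \<Rightarrow> 'a set \<Rightarrow> 'a set \<Rightarrow> bool" where
  "layer_iso phi I J Lam \<longleftrightarrow> (\<exists>g :: 'a \<Rightarrow> 'a \<Rightarrow> 'k.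
     g ` J = fin_fun Lam \<and>
     (\<forall>x\<in>J. \<forall>y\<in>J. g (x + y) = (\<lambda>i. g x i + g y i) \<and> g (x * y) = (\<lambda>i. g x i * g y i)) \<and>
     (\<forall>k. \<forall>x\<in>J. g (phi k * x) = (\<lambda>i. k * g x i)) \<and>
     {x\<in>J. g x = (\<lambda>i. 0)} = I)"

definition in_RK :: "('k::field \<Rightarrow> 'a::comm_ring_1) \<Rightarrow> 'a set \<Rightarrow> 'a \<Rightarrow> bool" where
  "in_RK phi A u \<longleftrightarrow> unital_K_subalgebra phi A u \<and>
     (\<forall>a\<in>A. \<exists>x\<in>A. a * x * a = a) \<and>
     A \<in> socle_ideals A \<and>
     (\<exists>I\<in>socle_ideals A. I \<noteq> A \<and> soc_succ A I = A) \<and>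
     (\<forall>I\<in>socle_ideals A. I \<noteq> A \<longrightarrow>
        (\<exists>Lam. Lam \<noteq> {} \<and> layer_iso phi I (soc_succ A I) Lam))"

text \<open>Top layer dimension: L_sigma = A/S_sigma is isomorphic to K^n.\<close>
definition top_dim :: "('k::field \<Rightarrow> 'a::comm_ring_1) \<Rightarrow> 'a set \<Rightarrow> nat \<Rightarrow> bool" where
  "top_dim phi A n \<longleftrightarrow> (\<exists>I\<in>socle_ideals A. I \<noteq> A \<and> soc_succ A I = A \<and>
     (\<exists>Lam. finite Lam \<and> card Lam = n \<and> layer_iso phi I A Lam))"

text \<open>Equal Loewy length: the socle sequences (S_alpha, alpha <= sigma+1) of A and B
  are order isomorphic.\<close>
definition same_loewy_length :: "'a::comm_ring_1 set \<Rightarrow> 'a set \<Rightarrow> bool" where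
  "same_loewy_length A B \<longleftrightarrow> (\<exists>f. bij_betw f (socle_ideals A) (socle_ideals B) \<and>
     (\<forall>I\<in>socle_ideals A. \<forall>J\<in>socle_ideals A. I \<subseteq> J \<longleftrightarrow> f I \<subseteq> f J))"

end

theory Submission
  imports Defs
begin

lemma soc_succ_sup: "I \<subseteq> soc_succ A I"
  by (auto simp: soc_succ_def)

lemma socle_zero: "X \<in> socle_ideals A \<Longrightarrow> (0::'a::comm_ring_1) \<in> X"
proof (induction rule: socle_ideals.induct)
  case (succ I) then show ?case using soc_succ_sup[of I A] by auto
next
  case (lim C) then show ?case by auto
qed

lemma towerA:
  fixes A :: "'a::comm_ring_1 set"
  assumes X: "X \<in> socle_ideals A"
    and good: "\<forall>Y\<in>socle_ideals A. Y \<subset> X \<longrightarrow> soc_succ A Y \<subseteq> X"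
  shows "Y \<in> socle_ideals A \<Longrightarrow> Y \<subseteq> X \<or> soc_succ A X \<subseteq> Y"
proof (induction Y rule: socle_ideals.induct)
  case (succ Z)
  from succ.IH show ?case
  proof
    assume "Z \<subseteq> X"
    then consider "Z \<subset> X" | "Z = X" by blast
    then show ?thesis using good succ.hyps by cases auto
  next
    assume "soc_succ A X \<subseteq> Z" then show ?thesis using soc_succ_sup[of Z A] by auto
  qed
next
  case (lim C)
  show ?case
  proof (cases "\<forall>Z\<in>C. Z \<subseteq> X")
    case True then show ?thesis using socle_zero[OF X] by auto
  next
    case False then obtain Z where "Z\<in>C" "\<not> Z \<subseteq> X" by auto
    with lim.IH show ?thesis by blast
  qed
qed

lemma towerB:
  fixes A :: "'a::comm_ring_1 set"
  shows "X \<in> socle_ideals A \<Longrightarrow> \<forall>Y\<in>socle_ideals A. Y \<subset> X \<longrightarrow> soc_succ A Y \<subseteq> X"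
proof (induction X rule: socle_ideals.induct)
  case (succ Z)
  show ?case
  proof (intro ballI impI)
    fix Y assume Y: "Y \<in> socle_ideals A" "Y \<subset> soc_succ A Z"
    from towerA[OF succ.hyps succ.IH Y(1)] Y(2) have "Y \<subseteq> Z" by auto
    then consider "Y \<subset> Z" | "Y = Z" by blast
    then show "soc_succ A Y \<subseteq> soc_succ A Z"
      using succ.IH Y(1) soc_succ_sup[of Z A] by cases auto
  qed
next
  case (lim C)
  show ?case
  proof (intro ballI impI)
    fix Y assume Y: "Y \<in> socle_ideals A" "Y \<subset> {0} \<union> \<Union>C"
    show "soc_succ A Y \<subseteq> {0} \<union> \<Union>C"
    proof (cases "\<exists>Z\<in>C. Y \<subset> Z")
      case True
      then obtain Z where "Z \<in> C" "Y \<subset> Z" by auto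
      with lim.IH Y(1) show ?thesis by blast
    next
      case False
      have "\<forall>Z\<in>C. Z \<subseteq> Y"
      proof
        fix Z assume Z: "Z \<in> C"
        with lim.IH have "Z \<in> socle_ideals A" "\<forall>Y\<in>socle_ideals A. Y \<subset> Z \<longrightarrow> soc_succ A Y \<subseteq> Z" by auto
        from towerA[OF this Y(1)] False Z soc_succ_sup[of Z A] show "Z \<subseteq> Y" by auto
      qed
      with socle_zero[OF Y(1)] Y(2) show ?thesis by auto
    qed
  qed
qed

lemma tower:
  fixes A :: "'a::comm_ring_1 set"
  assumes "X \<in> socle_ideals A" "Y \<in> socle_ideals A"
  shows "Y \<subseteq> X \<or> soc_succ A X \<subseteq> Y"
  using towerA[OF assms(1) towerB[OF assms(1)] assms(2)] .

lemma chain: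
  fixes A :: "'a::comm_ring_1 set"
  assumes "X \<in> socle_ideals A" "Y \<in> socle_ideals A"
  shows "Y \<subseteq> X \<or> X \<subseteq> Y"
  using tower[OF assms] soc_succ_sup[of X A] by auto


lemma ideal_add: "ideal_in A I \<Longrightarrow> x \<in> I \<Longrightarrow> y \<in> I \<Longrightarrow> x + y \<in> I"
  by (simp add: ideal_in_def)
lemma ideal_neg: "ideal_in A I \<Longrightarrow> x \<in> I \<Longrightarrow> - x \<in> I"
  by (simp add: ideal_in_def)
lemma ideal_mul: "ideal_in A I \<Longrightarrow> a \<in> A \<Longrightarrow> x \<in> I \<Longrightarrow> a * x \<in> I"
  by (simp add: ideal_in_def)
lemma ideal_mul2: "ideal_in A I \<Longrightarrow> a \<in> A \<Longrightarrow> x \<in> I \<Longrightarrow> x * a \<in> I"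
  by (simp add: ideal_in_def mult.commute)
lemma ideal_zero: "ideal_in A I \<Longrightarrow> 0 \<in> I"
  by (simp add: ideal_in_def)
lemma ideal_sub: "ideal_in A I \<Longrightarrow> x \<in> I \<Longrightarrow> y \<in> I \<Longrightarrow> x - y \<in> I"
  using ideal_add[of A I x "- y"] ideal_neg[of A I y] by simp
lemma ideal_subset: "ideal_in A I \<Longrightarrow> I \<subseteq> A"
  by (simp add: ideal_in_def)

lemma Inter_ideal:
  assumes "\<forall>J\<in>F. ideal_in A J" "A \<in> F"
  shows "ideal_in A (\<Inter>F)"
  unfolding ideal_in_def
proof (intro conjI ballI)
  show "\<Inter>F \<subseteq> A" using assms(2) by auto
  show "0 \<in> \<Inter>F" using assms(1) unfolding ideal_in_def by auto
  fix x assume x: "x \<in> \<Inter>F"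
  show "- x \<in> \<Inter>F" using assms(1) x unfolding ideal_in_def by auto
  { fix y assume "y \<in> \<Inter>F"
    then show "x + y \<in> \<Inter>F" using assms(1) x unfolding ideal_in_def by auto }
  { fix a assume "a \<in> A"
    then show "a * x \<in> \<Inter>F" using assms(1) x unfolding ideal_in_def by auto }
qed

lemma soc_succ_ideal:
  assumes "ideal_in A A" "I \<subseteq> A"
  shows "ideal_in A (soc_succ A I)"
proof -
  have AF: "A \<in> {J'. ideal_in A J' \<and> I \<subseteq> J' \<and> (\<forall>J. minimal_over A I J \<longrightarrow> J \<subseteq> J')}"
    using assms by (auto simp: minimal_over_def ideal_in_def)
  show ?thesis
    unfolding soc_succ_def by (rule Inter_ideal[OF _ AF]) auto
qed

lemma socle_ideal_UNIV:
  "X \<in> socle_ideals (UNIV::'a::comm_ring_1 set) \<Longrightarrow> ideal_in UNIV X"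
proof (induction rule: socle_ideals.induct)
  case (succ I)
  show ?case by (rule soc_succ_ideal) (simp_all add: ideal_in_def)
next
  case (lim C)
  have mem: "\<forall>Z\<in>C. Z \<in> socle_ideals UNIV" and id: "\<forall>Z\<in>C. ideal_in UNIV Z"
    using lim.IH by auto
  have ch: "\<forall>Z1\<in>C. \<forall>Z2\<in>C. Z1 \<subseteq> Z2 \<or> Z2 \<subseteq> Z1" using mem chain by metis
  show ?case unfolding ideal_in_def
  proof (intro conjI ballI)
    fix x y assume x: "x \<in> {0} \<union> \<Union>C" and y: "y \<in> {0} \<union> \<Union>C"
    show "x + y \<in> {0} \<union> \<Union>C"
    proof (cases "x = 0 \<or> y = 0")
      case True then show ?thesis using x y by (metis add.left_neutral add.right_neutral)
    next
      case False
      then obtain Z1 Z2 where Z: "Z1 \<in> C" "Z2 \<in> C" "x \<in> Z1" "y \<in> Z2" using x y by auto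
      from ch Z(1,2) have "(x \<in> Z2 \<and> y \<in> Z2) \<or> (x \<in> Z1 \<and> y \<in> Z1)" using Z(3,4) by blast
      then show ?thesis
      proof
        assume "x \<in> Z2 \<and> y \<in> Z2"
        then have "x + y \<in> Z2" using id Z(2) ideal_add by blast
        then show ?thesis using Z(2) by blast
      next
        assume "x \<in> Z1 \<and> y \<in> Z1"
        then have "x + y \<in> Z1" using id Z(1) ideal_add by blast
        then show ?thesis using Z(1) by blast
      qed
    qed
  next
    fix x assume "x \<in> {0} \<union> \<Union>C"
    then show "- x \<in> {0} \<union> \<Union>C" using id ideal_neg[of UNIV _ x] by auto
  next
    fix a x assume "x \<in> {0} \<union> \<Union>C"
    then show "a * x \<in> {0} \<union> \<Union>C" using id ideal_mul[of UNIV _ a x] by auto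
  next
    show "{0} \<union> \<Union>C \<subseteq> UNIV" by simp
  next
    show "(0::'a) \<in> {0} \<union> \<Union>C" by simp
  qed
qed


lemma inB: "e * e = e \<Longrightarrow> (x \<in> range (\<lambda>x. e * x)) = (e * x = (x::'a::comm_ring_1))"
proof
  assume "e * e = e" "x \<in> range (\<lambda>x. e * x)"
  then obtain y where "x = e * y" by auto
  then show "e * x = x" using \<open>e * e = e\<close> by (metis mult.assoc)
next
  assume "e * x = x" then show "x \<in> range (\<lambda>x. e * x)" by (metis rangeI)
qed

lemma B_ideal_R:
  fixes e :: "'a::comm_ring_1"
  assumes "e * e = e"
  shows "ideal_in UNIV (range (\<lambda>x. e * x))"
  unfolding ideal_in_def
proof (intro conjI ballI)
  show "0 \<in> range (\<lambda>x. e * x)" by (metis mult_zero_right rangeI)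
  fix x assume x: "x \<in> range (\<lambda>x. e * x)"
  then obtain u where u: "x = e * u" by auto
  show "- x \<in> range (\<lambda>x. e * x)" using u by (metis mult_minus_right rangeI)
  { fix y assume "y \<in> range (\<lambda>x. e * x)"
    then obtain v where "y = e * v" by auto
    then show "x + y \<in> range (\<lambda>x. e * x)" using u by (metis distrib_left rangeI) }
  { fix a :: 'a
    show "a * x \<in> range (\<lambda>x. e * x)" using u by (metis mult.left_commute rangeI) }
qed simp

lemma ideal_B_R:
  fixes e :: "'a::comm_ring_1"
  assumes e: "e * e = e" and J: "ideal_in (range (\<lambda>x. e * x)) J"
  shows "ideal_in UNIV J"
  unfolding ideal_in_def
proof (intro conjI ballI)
  show "0 \<in> J" using J by (rule ideal_zero)
  fix x assume x: "x \<in> J"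
  show "- x \<in> J" using J x by (rule ideal_neg)
  { fix y assume "y \<in> J" then show "x + y \<in> J" using J x ideal_add by blast }
  { fix a :: 'a
    have xB: "e * x = x" using ideal_subset[OF J] x inB[OF e] by blast
    have "a * x = (a * e) * x" using xB by (metis mult.assoc)
    moreover have "a * e \<in> range (\<lambda>x. e * x)" by (metis mult.commute rangeI)
    ultimately show "a * x \<in> J" using ideal_mul[OF J _ x] by simp }
qed simp

lemma ideal_R_B:
  fixes e :: "'a::comm_ring_1"
  assumes e: "e * e = e" and I: "ideal_in UNIV I"
  shows "ideal_in (range (\<lambda>x. e * x)) (I \<inter> range (\<lambda>x. e * x))"
  using B_ideal_R[OF e] I unfolding ideal_in_def by auto

lemma ideal_sumset:
  fixes I J :: "'a::comm_ring_1 set"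
  assumes J: "ideal_in UNIV J" and I: "ideal_in UNIV I"
  shows "ideal_in UNIV {j + i |j i. j \<in> J \<and> i \<in> I}"
  unfolding ideal_in_def
proof (intro conjI ballI)
  show "0 \<in> {j + i |j i. j \<in> J \<and> i \<in> I}" using ideal_zero[OF J] ideal_zero[OF I] by force
  fix x assume "x \<in> {j + i |j i. j \<in> J \<and> i \<in> I}"
  then obtain j i where x: "x = j + i" "j \<in> J" "i \<in> I" by auto
  show "- x \<in> {j + i |j i. j \<in> J \<and> i \<in> I}"
    using x ideal_neg[OF J x(2)] ideal_neg[OF I x(3)] by (metis (mono_tags, lifting) add_uminus_conv_diff diff_minus_eq_add mem_Collect_eq minus_add_distrib)
  { fix y assume "y \<in> {j + i |j i. j \<in> J \<and> i \<in> I}"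
    then obtain j' i' where y: "y = j' + i'" "j' \<in> J" "i' \<in> I" by auto
    have "x + y = (j + j') + (i + i')" using x y by (simp add: algebra_simps)
    then show "x + y \<in> {j + i |j i. j \<in> J \<and> i \<in> I}"
      using ideal_add[OF J x(2) y(2)] ideal_add[OF I x(3) y(3)] by blast }
  { fix a :: 'a
    have "a * x = a * j + a * i" using x by (simp add: algebra_simps)
    then show "a * x \<in> {j + i |j i. j \<in> J \<and> i \<in> I}"
      using ideal_mul[OF J _ x(2), of a] ideal_mul[OF I _ x(3), of a] by blast }
qed simp


lemma B_ideal_B:
  fixes e :: "'a::comm_ring_1"
  assumes e: "e * e = e"
  shows "ideal_in (range (\<lambda>x. e * x)) (range (\<lambda>x. e * x))"
  using B_ideal_R[OF e] unfolding ideal_in_def by auto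

lemma soc_comm_sub:
  fixes e :: "'a::comm_ring_1"
  assumes e: "e * e = e" and I: "ideal_in UNIV I"
  shows "soc_succ (range (\<lambda>x. e * x)) (I \<inter> range (\<lambda>x. e * x)) \<subseteq> soc_succ UNIV I \<inter> range (\<lambda>x. e * x)"
proof -
  let ?B = "range (\<lambda>x. e * x)"
  have SI: "ideal_in UNIV (soc_succ UNIV I)" by (rule soc_succ_ideal) (simp_all add: ideal_in_def)
  have min: "J \<subseteq> soc_succ UNIV I" if J: "minimal_over ?B (I \<inter> ?B) J" for J
  proof -
    have JB: "ideal_in ?B J" and JI: "I \<inter> ?B \<subset> J"
      and Jmin: "\<And>J'. ideal_in ?B J' \<Longrightarrow> I \<inter> ?B \<subset> J' \<Longrightarrow> J' \<subseteq> J \<Longrightarrow> J' = J"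
      using J unfolding minimal_over_def by auto
    have JR: "ideal_in UNIV J" using ideal_B_R[OF e JB] .
    have JsB: "J \<subseteq> ?B" using ideal_subset[OF JB] .
    define M where "M = {j + i |j i. j \<in> J \<and> i \<in> I}"
    have MR: "ideal_in UNIV M" unfolding M_def by (rule ideal_sumset[OF JR I])
    have IM: "I \<subseteq> M" unfolding M_def using ideal_zero[OF JR] by force
    have JM: "J \<subseteq> M" unfolding M_def using ideal_zero[OF I] by force
    have "minimal_over UNIV I M"
      unfolding minimal_over_def
    proof (intro conjI allI impI)
      show "ideal_in UNIV M" by fact
      obtain j where j: "j \<in> J" "j \<notin> I \<inter> ?B" using JI by auto
      then have "j \<notin> I" using JsB by auto
      then show "I \<subset> M" using IM JM j by auto
    next
      fix J' assume H: "ideal_in UNIV J' \<and> I \<subset> J' \<and> J' \<subseteq> M"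
      have J'B: "ideal_in ?B (J' \<inter> ?B)" using ideal_R_B[OF e] H by auto
      have MB: "M \<inter> ?B \<subseteq> J"
      proof
        fix x assume "x \<in> M \<inter> ?B"
        then obtain j i where x: "x = j + i" "j \<in> J" "i \<in> I" "e * x = x"
          unfolding M_def using inB[OF e] by auto
        have "e * j = j" using x(2) JsB inB[OF e] by auto
        then have "x = j + e * i" using x by (metis distrib_left)
        moreover have "e * i \<in> J" using ideal_mul[OF I _ x(3), of e] JI by auto
        ultimately show "x \<in> J" using ideal_add[OF JR x(2)] by simp
      qed
      obtain x where x: "x \<in> J'" "x \<notin> I" using H by auto
      have "x \<in> M" using H x by auto
      then obtain j i where xji: "x = j + i" "j \<in> J" "i \<in> I" unfolding M_def by auto
      have ej: "e * j = j" using xji(2) JsB inB[OF e] by auto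
      have ex: "e * x = j + e * i" using xji ej by (simp add: distrib_left)
      have exJ': "e * x \<in> J'" using ideal_mul[of UNIV J' e x] H x by simp
      have "e * x \<notin> I"
      proof
        assume "e * x \<in> I"
        then have "j \<in> I" using ex ideal_sub[OF I _ ideal_mul[OF I _ xji(3)], of "e * x" e] by simp
        then show False using x xji ideal_add[OF I] by auto
      qed
      then have "I \<inter> ?B \<subset> J' \<inter> ?B" using exJ' H by auto
      moreover have "J' \<inter> ?B \<subseteq> J" using H MB by auto
      ultimately have "J' \<inter> ?B = J" using Jmin[OF J'B] by auto
      then have "J \<subseteq> J'" by auto
      have "M \<subseteq> J'"
      proof
        fix y assume "y \<in> M"
        then obtain j i where "y = j + i" "j \<in> J" "i \<in> I" unfolding M_def by auto
        then show "y \<in> J'" using \<open>J \<subseteq> J'\<close> H ideal_add[of UNIV J' j i] by auto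
      qed
      then show "J' = M" using H by auto
    qed
    then have "M \<subseteq> soc_succ UNIV I" unfolding soc_succ_def
      by (intro Inter_greatest) (simp only: mem_Collect_eq)
    then show ?thesis using JM by auto
  qed
  have "soc_succ UNIV I \<inter> ?B \<in> {J'. ideal_in ?B J' \<and> I \<inter> ?B \<subseteq> J' \<and> (\<forall>J. minimal_over ?B (I \<inter> ?B) J \<longrightarrow> J \<subseteq> J')}"
  proof (intro CollectI conjI allI impI)
    show "ideal_in ?B (soc_succ UNIV I \<inter> ?B)" using ideal_R_B[OF e SI] .
    show "I \<inter> ?B \<subseteq> soc_succ UNIV I \<inter> ?B" using soc_succ_sup[of I UNIV] by auto
    fix J assume J: "minimal_over ?B (I \<inter> ?B) J"
    then have "ideal_in ?B J" unfolding minimal_over_def by simp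
    then have "J \<subseteq> ?B" by (rule ideal_subset)
    then show "J \<subseteq> soc_succ UNIV I \<inter> ?B" using min[OF J] by auto
  qed
  then show ?thesis unfolding soc_succ_def[of ?B] by (rule Inter_lower)
qed


lemma soc_comm_sup:
  fixes e :: "'a::comm_ring_1"
  assumes e: "e * e = e" and I: "ideal_in UNIV I"
  shows "soc_succ UNIV I \<inter> range (\<lambda>x. e * x) \<subseteq> soc_succ (range (\<lambda>x. e * x)) (I \<inter> range (\<lambda>x. e * x))"
proof
  let ?B = "range (\<lambda>x. e * x)"
  define S where "S = soc_succ ?B (I \<inter> ?B)"
  have SB: "ideal_in ?B S" unfolding S_def by (rule soc_succ_ideal[OF B_ideal_B[OF e]]) auto
  have IS: "I \<inter> ?B \<subseteq> S" unfolding S_def by (rule soc_succ_sup)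
  define J' where "J' = {y. e * y \<in> S}"
  have eB: "e * y \<in> ?B" for y by auto
  have J'R: "ideal_in UNIV J'"
    unfolding ideal_in_def J'_def
  proof (intro conjI ballI)
    show "0 \<in> {y. e * y \<in> S}" using ideal_zero[OF SB] by simp
    fix x assume x: "x \<in> {y. e * y \<in> S}"
    show "- x \<in> {y. e * y \<in> S}" using ideal_neg[OF SB] x by simp
    { fix y assume "y \<in> {y. e * y \<in> S}"
      then show "x + y \<in> {y. e * y \<in> S}" using ideal_add[OF SB] x by (simp add: distrib_left) }
    { fix a :: 'a
      have "e * (a * x) = (e * a) * (e * x)" using e by (metis mult.assoc mult.left_commute)
      then show "a * x \<in> {y. e * y \<in> S}" using ideal_mul[OF SB eB] x by simp }
  qed simp
  have IJ': "I \<subseteq> J'"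
  proof
    fix i assume "i \<in> I"
    then have "e * i \<in> I \<inter> ?B" using ideal_mul[OF I] by auto
    then show "i \<in> J'" using IS unfolding J'_def by auto
  qed
  have minJ: "J \<subseteq> J'" if J: "minimal_over UNIV I J" for J
  proof -
    have JR: "ideal_in UNIV J" and IJ: "I \<subset> J"
      and Jmin: "\<And>J1. ideal_in UNIV J1 \<Longrightarrow> I \<subset> J1 \<Longrightarrow> J1 \<subseteq> J \<Longrightarrow> J1 = J"
      using J unfolding minimal_over_def by auto
    have "J \<inter> ?B \<subseteq> S"
    proof (cases "J \<inter> ?B = I \<inter> ?B")
      case True then show ?thesis using IS by simp
    next
      case False
      then have sub: "I \<inter> ?B \<subset> J \<inter> ?B" using IJ by auto
      have "minimal_over ?B (I \<inter> ?B) (J \<inter> ?B)"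
        unfolding minimal_over_def
      proof (intro conjI allI impI)
        show "ideal_in ?B (J \<inter> ?B)" using ideal_R_B[OF e JR] .
        show "I \<inter> ?B \<subset> J \<inter> ?B" by fact
        fix J1 assume H: "ideal_in ?B J1 \<and> I \<inter> ?B \<subset> J1 \<and> J1 \<subseteq> J \<inter> ?B"
        have J1R: "ideal_in UNIV J1" using ideal_B_R[OF e] H by blast
        have J1B: "J1 \<subseteq> ?B" using H by auto
        define M where "M = {j + i |j i. j \<in> J1 \<and> i \<in> I}"
        have MR: "ideal_in UNIV M" unfolding M_def by (rule ideal_sumset[OF J1R I])
        have IM: "I \<subseteq> M" unfolding M_def using ideal_zero[OF J1R] by force
        have J1M: "J1 \<subseteq> M" unfolding M_def using ideal_zero[OF I] by force
        obtain j where j: "j \<in> J1" "j \<notin> I \<inter> ?B" using H by auto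
        then have "j \<notin> I" using J1B by auto
        then have "I \<subset> M" using IM J1M j by auto
        moreover have "M \<subseteq> J"
        proof
          fix y assume "y \<in> M"
          then obtain j i where "y = j + i" "j \<in> J1" "i \<in> I" unfolding M_def by auto
          then show "y \<in> J" using H IJ ideal_add[OF JR, of j i] by auto
        qed
        ultimately have MJ: "M = J" using Jmin[OF MR] by auto
        show "J1 = J \<inter> ?B"
        proof
          show "J1 \<subseteq> J \<inter> ?B" using H by auto
          show "J \<inter> ?B \<subseteq> J1"
          proof
            fix y assume y: "y \<in> J \<inter> ?B"
            then obtain j i where ji: "y = j + i" "j \<in> J1" "i \<in> I" using MJ unfolding M_def by auto
            have ey: "e * y = y" using y inB[OF e] by auto
            have ej: "e * j = j" using ji(2) J1B inB[OF e] by auto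
            have "y = j + e * i" using ey ji ej by (metis distrib_left)
            moreover have "e * i \<in> J1" using ideal_mul[OF I _ ji(3), of e] H by auto
            ultimately show "y \<in> J1" using ideal_add[OF J1R ji(2)] by simp
          qed
        qed
      qed
      then show ?thesis unfolding S_def soc_succ_def by (intro Inter_greatest) (simp only: mem_Collect_eq)
    qed
    then show ?thesis unfolding J'_def using ideal_mul[OF JR] by auto
  qed
  have "soc_succ UNIV I \<subseteq> J'" unfolding soc_succ_def
    using J'R IJ' minJ by (intro Inter_lower) simp
  fix x assume "x \<in> soc_succ UNIV I \<inter> ?B"
  then have "x \<in> J'" "e * x = x" using \<open>soc_succ UNIV I \<subseteq> J'\<close> inB[OF e] by auto
  then show "x \<in> S" unfolding J'_def by simp
qed

lemma soc_comm:
  fixes e :: "'a::comm_ring_1"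
  assumes e: "e * e = e" and I: "ideal_in UNIV I"
  shows "soc_succ (range (\<lambda>x. e * x)) (I \<inter> range (\<lambda>x. e * x)) = soc_succ UNIV I \<inter> range (\<lambda>x. e * x)"
  using soc_comm_sub[OF assms] soc_comm_sup[OF assms] by (rule antisym)


lemma phi_socle:
  fixes e :: "'a::comm_ring_1"
  assumes e: "e * e = e"
  shows "X \<in> socle_ideals UNIV \<Longrightarrow> X \<inter> range (\<lambda>x. e * x) \<in> socle_ideals (range (\<lambda>x. e * x))"
proof (induction rule: socle_ideals.induct)
  case (succ I)
  have "soc_succ UNIV I \<inter> range (\<lambda>x. e * x) = soc_succ (range (\<lambda>x. e * x)) (I \<inter> range (\<lambda>x. e * x))"
    using soc_comm[OF e socle_ideal_UNIV[OF succ.hyps]] by simp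
  then show ?case using socle_ideals.succ[OF succ.IH] by simp
next
  case (lim C)
  have "({0} \<union> \<Union>C) \<inter> range (\<lambda>x. e * x) = {0} \<union> \<Union>((\<lambda>Z. Z \<inter> range (\<lambda>x. e * x)) ` C)"
    by (auto intro: range_eqI[of 0 _ 0])
  moreover have "\<forall>I\<in>(\<lambda>Z. Z \<inter> range (\<lambda>x. e * x)) ` C. I \<in> socle_ideals (range (\<lambda>x. e * x))"
    using lim.IH by auto
  ultimately show ?case using socle_ideals.lim by metis
qed

lemma phi_surj:
  fixes e :: "'a::comm_ring_1"
  assumes e: "e * e = e"
  shows "Y \<in> socle_ideals (range (\<lambda>x. e * x)) \<Longrightarrow> \<exists>X\<in>socle_ideals UNIV. Y = X \<inter> range (\<lambda>x. e * x)"
proof (induction rule: socle_ideals.induct)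
  case (succ I)
  then obtain X where X: "X \<in> socle_ideals UNIV" "I = X \<inter> range (\<lambda>x. e * x)" by auto
  have "soc_succ (range (\<lambda>x. e * x)) I = soc_succ UNIV X \<inter> range (\<lambda>x. e * x)"
    using soc_comm[OF e socle_ideal_UNIV[OF X(1)]] X(2) by simp
  then show ?case using socle_ideals.succ[OF X(1)] by blast
next
  case (lim C)
  define D where "D = {X \<in> socle_ideals UNIV. X \<inter> range (\<lambda>x. e * x) \<in> C}"
  have "{0} \<union> \<Union>D \<in> socle_ideals UNIV" using socle_ideals.lim[of D] unfolding D_def by auto
  moreover have "{0} \<union> \<Union>C = ({0} \<union> \<Union>D) \<inter> range (\<lambda>x. e * x)"
  proof
    show "{0} \<union> \<Union>C \<subseteq> ({0} \<union> \<Union>D) \<inter> range (\<lambda>x. e * x)"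
    proof
      fix x assume "x \<in> {0} \<union> \<Union>C"
      then consider "x = 0" | Z where "Z \<in> C" "x \<in> Z" by auto
      then show "x \<in> ({0} \<union> \<Union>D) \<inter> range (\<lambda>x. e * x)"
      proof cases
        case 1 then show ?thesis by (auto intro: range_eqI[of 0 _ 0])
      next
        case 2
        then obtain X where "X \<in> socle_ideals UNIV" "Z = X \<inter> range (\<lambda>x. e * x)" using lim.IH by blast
        then show ?thesis using 2 unfolding D_def by auto
      qed
    qed
    show "({0} \<union> \<Union>D) \<inter> range (\<lambda>x. e * x) \<subseteq> {0} \<union> \<Union>C"
      unfolding D_def by auto
  qed
  ultimately show ?case by blast
qed

lemma strict_layer:
  fixes e :: "'a::comm_ring_1"
  assumes e: "e * e = e" and U: "UNIV \<in> socle_ideals (UNIV::'a set)"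
    and I0: "I0 \<in> socle_ideals UNIV" "soc_succ UNIV I0 = UNIV" "e \<notin> I0"
    and J: "J \<in> socle_ideals UNIV" "J \<noteq> UNIV"
  shows "J \<inter> range (\<lambda>x. e * x) \<noteq> soc_succ UNIV J \<inter> range (\<lambda>x. e * x)"
proof
  let ?B = "range (\<lambda>x. e * x)"
  assume eq: "J \<inter> ?B = soc_succ UNIV J \<inter> ?B"
  have JR: "ideal_in UNIV J" using socle_ideal_UNIV[OF J(1)] .
  have "Y \<in> socle_ideals UNIV \<Longrightarrow> J \<subseteq> Y \<longrightarrow> Y \<inter> ?B = J \<inter> ?B" for Y
  proof (induction Y rule: socle_ideals.induct)
    case (succ Z)
    show ?case
    proof
      assume JZ: "J \<subseteq> soc_succ UNIV Z"
      have ZR: "ideal_in UNIV Z" using socle_ideal_UNIV[OF succ.hyps] .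
      from tower[OF J(1) succ.hyps] show "soc_succ UNIV Z \<inter> ?B = J \<inter> ?B"
      proof
        assume "soc_succ UNIV J \<subseteq> Z"
        then have "J \<subseteq> Z" using soc_succ_sup[of J UNIV] by auto
        then have "Z \<inter> ?B = J \<inter> ?B" using succ.IH by auto
        then have "soc_succ UNIV Z \<inter> ?B = soc_succ UNIV J \<inter> ?B"
          using soc_comm[OF e ZR] soc_comm[OF e JR] by simp
        then show ?thesis using eq by simp
      next
        assume ZJ: "Z \<subseteq> J"
        from tower[OF succ.hyps J(1)] show ?thesis
        proof
          assume "J \<subseteq> Z" then have "J = Z" using ZJ by auto
          then show ?thesis using eq by simp
        next
          assume "soc_succ UNIV Z \<subseteq> J" then show ?thesis using JZ by auto
        qed
      qed
    qed
  next
    case (lim C)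
    show ?case
    proof
      assume JC: "J \<subseteq> {0} \<union> \<Union>C"
      have "\<forall>Z\<in>C. Z \<inter> ?B \<subseteq> J \<inter> ?B"
      proof
        fix Z assume Z: "Z \<in> C"
        then have ZS: "Z \<in> socle_ideals UNIV" "J \<subseteq> Z \<longrightarrow> Z \<inter> ?B = J \<inter> ?B" using lim.IH by auto
        from chain[OF ZS(1) J(1)] show "Z \<inter> ?B \<subseteq> J \<inter> ?B" using ZS(2) by auto
      qed
      then have "({0} \<union> \<Union>C) \<inter> ?B \<subseteq> J \<inter> ?B" using ideal_zero[OF JR] by auto
      then show "({0} \<union> \<Union>C) \<inter> ?B = J \<inter> ?B" using JC by auto
    qed
  qed
  from this[OF U] have "?B \<subseteq> J" by auto
  then have "e \<in> J" by (metis mult.right_neutral rangeI subsetD)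
  from tower[OF I0(1) J(1)] J(2) I0(2) have "J \<subseteq> I0" by auto
  then show False using \<open>e \<in> J\<close> I0(3) by auto
qed

lemma order_reflect:
  fixes e :: "'a::comm_ring_1"
  assumes e: "e * e = e" and U: "UNIV \<in> socle_ideals (UNIV::'a set)"
    and I0: "I0 \<in> socle_ideals UNIV" "soc_succ UNIV I0 = UNIV" "e \<notin> I0"
    and I: "I \<in> socle_ideals UNIV" and J: "J \<in> socle_ideals UNIV"
    and sub: "I \<inter> range (\<lambda>x. e * x) \<subseteq> J \<inter> range (\<lambda>x. e * x)"
  shows "I \<subseteq> J"
proof (rule ccontr)
  assume nIJ: "\<not> I \<subseteq> J"
  then have "J \<subseteq> I" using chain[OF I J] by auto
  then have "J \<noteq> UNIV" using nIJ by auto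
  from tower[OF J I] nIJ have "soc_succ UNIV J \<subseteq> I" by auto
  then have "soc_succ UNIV J \<inter> range (\<lambda>x. e * x) \<subseteq> J \<inter> range (\<lambda>x. e * x)" using sub by auto
  moreover have "J \<subseteq> soc_succ UNIV J" by (rule soc_succ_sup)
  ultimately have "J \<inter> range (\<lambda>x. e * x) = soc_succ UNIV J \<inter> range (\<lambda>x. e * x)" by auto
  then show False using strict_layer[OF e U I0 J \<open>J \<noteq> UNIV\<close>] by simp
qed


lemma image_fin_fun:
  fixes g :: "'a::comm_ring_1 \<Rightarrow> 'b \<Rightarrow> 'k::field"
  assumes gX: "g ` X = fin_fun Lam"
    and hom: "\<forall>x\<in>X. \<forall>y\<in>X. g (x + y) = (\<lambda>i. g x i + g y i) \<and> g (x * y) = (\<lambda>i. g x i * g y i)"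
    and YX: "Y \<subseteq> X" and Y0: "0 \<in> Y" and Yadd: "\<forall>x\<in>Y. \<forall>y\<in>Y. x + y \<in> Y"
    and Ymul: "\<forall>x\<in>X. \<forall>y\<in>Y. x * y \<in> Y"
  shows "g ` Y = fin_fun {\<mu>. \<exists>y\<in>Y. g y \<mu> \<noteq> 0}"
proof -
  let ?S = "{\<mu>. \<exists>y\<in>Y. g y \<mu> \<noteq> 0}"
  have g0: "g 0 = (\<lambda>i. 0)"
  proof
    fix i
    have "g (0 + 0) = (\<lambda>i. g 0 i + g 0 i)" using hom Y0 YX by blast
    then have "g 0 i = g 0 i + g 0 i" by (metis add_0)
    then show "g 0 i = 0" by (metis add_cancel_right_right)
  qed
  have delta: "(\<lambda>i. if i = \<mu> then c else 0) \<in> g ` Y" if mu: "\<mu> \<in> ?S" for \<mu> c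
  proof -
    obtain y where y: "y \<in> Y" "g y \<mu> \<noteq> 0" using mu by auto
    have "g y \<in> fin_fun Lam" using gX y(1) YX by auto
    then have "\<mu> \<in> Lam" using y(2) unfolding fin_fun_def by auto
    define h where "h = (\<lambda>i. if i = \<mu> then c / g y \<mu> else (0::'k))"
    have "{i. h i \<noteq> 0} \<subseteq> {\<mu>}" unfolding h_def by auto
    then have fh: "finite {i. h i \<noteq> 0}" using finite_subset by blast
    have "\<forall>i. i \<notin> Lam \<longrightarrow> h i = 0" unfolding h_def using \<open>\<mu> \<in> Lam\<close> by auto
    then have "h \<in> fin_fun Lam" unfolding fin_fun_def using fh by blast
    then obtain x where x: "x \<in> X" "g x = h" using gX by (metis imageE)
    have "g (x * y) = (\<lambda>i. g x i * g y i)" using hom x(1) y(1) YX by blast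
    also have "\<dots> = (\<lambda>i. if i = \<mu> then c else 0)" using x(2) y(2) unfolding h_def by auto
    finally show ?thesis using Ymul x(1) y(1) by (metis image_eqI)
  qed
  have main: "finite F \<Longrightarrow> F \<subseteq> ?S \<Longrightarrow> (\<forall>i. i \<notin> F \<longrightarrow> f i = 0) \<Longrightarrow> f \<in> g ` Y" for F and f :: "'b \<Rightarrow> 'k"
  proof (induction F arbitrary: f rule: finite_induct)
    case empty
    then have "f = (\<lambda>i. 0)" by auto
    then show ?case using g0 Y0 by (metis image_eqI)
  next
    case (insert \<mu> F)
    have "F \<subseteq> ?S" using insert.prems by auto
    moreover have "\<forall>i. i \<notin> F \<longrightarrow> (f(\<mu> := 0)) i = 0" using insert.prems by auto
    ultimately have "f(\<mu> := 0) \<in> g ` Y" by (rule insert.IH)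
    then obtain y1 where y1: "y1 \<in> Y" "g y1 = f(\<mu> := 0)" by auto
    have "\<mu> \<in> ?S" using insert.prems by simp
    from delta[OF this, of "f \<mu>"]
    obtain y2 where y2: "y2 \<in> Y" "g y2 = (\<lambda>i. if i = \<mu> then f \<mu> else 0)"
      by (metis (no_types, lifting) imageE)
    have "g (y1 + y2) = (\<lambda>i. g y1 i + g y2 i)" using hom y1(1) y2(1) YX by blast
    also have "\<dots> = f" by (rule ext) (simp add: y1(2) y2(2))
    finally show ?case using Yadd y1(1) y2(1) by (metis image_eqI)
  qed
  show ?thesis
  proof
    show "g ` Y \<subseteq> fin_fun ?S"
    proof
      fix v assume "v \<in> g ` Y"
      then obtain y where y: "y \<in> Y" "v = g y" by auto
      then have "g y \<in> fin_fun Lam" using gX YX by auto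
      then have "finite {i. g y i \<noteq> 0}" unfolding fin_fun_def by simp
      moreover have "\<forall>i. i \<notin> ?S \<longrightarrow> g y i = 0" using y(1) by blast
      ultimately show "v \<in> fin_fun ?S" using y(2) unfolding fin_fun_def by simp
    qed
    show "fin_fun ?S \<subseteq> g ` Y"
    proof
      fix f :: "'b \<Rightarrow> 'k" assume "f \<in> fin_fun ?S"
      then have "finite {i. f i \<noteq> 0}" "{i. f i \<noteq> 0} \<subseteq> ?S" unfolding fin_fun_def by auto
      moreover have "\<forall>i. i \<notin> {i. f i \<noteq> 0} \<longrightarrow> f i = 0" by simp
      ultimately show "f \<in> g ` Y" by (rule main)
    qed
  qed
qed


lemma layer_restrict:
  fixes g :: "'a::comm_ring_1 \<Rightarrow> 'a \<Rightarrow> 'k::field" and phi :: "'k \<Rightarrow> 'a"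
  assumes gZ: "g ` Z = fin_fun Lam"
    and hom: "\<forall>x\<in>Z. \<forall>y\<in>Z. g (x + y) = (\<lambda>i. g x i + g y i) \<and> g (x * y) = (\<lambda>i. g x i * g y i)"
    and scal: "\<forall>k. \<forall>x\<in>Z. g (phi k * x) = (\<lambda>i. k * g x i)"
    and ker: "{x\<in>Z. g x = (\<lambda>i. 0)} = X"
    and Z: "ideal_in UNIV Z" and e: "e * e = e"
  shows "layer_iso phi (X \<inter> range (\<lambda>x. e * x)) (Z \<inter> range (\<lambda>x. e * x))
           {\<mu>. \<exists>y\<in>Z \<inter> range (\<lambda>x. e * x). g y \<mu> \<noteq> 0}"
proof -
  let ?B = "range (\<lambda>x. e * x)"
  have BR: "ideal_in UNIV ?B" using B_ideal_R[OF e] .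
  have img: "g ` (Z \<inter> ?B) = fin_fun {\<mu>. \<exists>y\<in>Z \<inter> ?B. g y \<mu> \<noteq> 0}"
  proof (rule image_fin_fun[OF gZ hom])
    show "Z \<inter> ?B \<subseteq> Z" by auto
    show "0 \<in> Z \<inter> ?B" using ideal_zero[OF Z] ideal_zero[OF BR] by auto
    show "\<forall>x\<in>Z \<inter> ?B. \<forall>y\<in>Z \<inter> ?B. x + y \<in> Z \<inter> ?B"
      using ideal_add[OF Z] ideal_add[OF BR] by blast
    show "\<forall>x\<in>Z. \<forall>y\<in>Z \<inter> ?B. x * y \<in> Z \<inter> ?B"
      using ideal_mul[OF Z] ideal_mul[OF BR] by blast
  qed
  show ?thesis unfolding layer_iso_def
  proof (intro exI[of _ g] conjI)
    show "g ` (Z \<inter> ?B) = fin_fun {\<mu>. \<exists>y\<in>Z \<inter> ?B. g y \<mu> \<noteq> 0}" by (rule img)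
    show "\<forall>x\<in>Z \<inter> ?B. \<forall>y\<in>Z \<inter> ?B. g (x + y) = (\<lambda>i. g x i + g y i) \<and> g (x * y) = (\<lambda>i. g x i * g y i)"
      using hom by blast
    show "\<forall>k. \<forall>x\<in>Z \<inter> ?B. g (phi k * x) = (\<lambda>i. k * g x i)" using scal by blast
    show "{x \<in> Z \<inter> ?B. g x = (\<lambda>i. 0)} = X \<inter> ?B" using ker by blast
  qed
qed


lemma block_props:
  fixes phi :: "'k::field \<Rightarrow> 'a::comm_ring_1" and e :: 'a and g :: "'a \<Rightarrow> 'a \<Rightarrow> 'k"
  assumes RK: "in_RK phi (UNIV::'a set) 1"
    and I0: "I0 \<in> socle_ideals UNIV" "I0 \<noteq> UNIV" "soc_succ UNIV I0 = UNIV"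
    and gU: "g ` UNIV = fin_fun Lam"
    and hom: "\<forall>x\<in>UNIV. \<forall>y\<in>UNIV. g (x + y) = (\<lambda>i. g x i + g y i) \<and> g (x * y) = (\<lambda>i. g x i * g y i)"
    and scal: "\<forall>k. \<forall>x\<in>UNIV. g (phi k * x) = (\<lambda>i. k * g x i)"
    and ker: "{x\<in>UNIV. g x = (\<lambda>i. 0)} = I0"
    and e: "e * e = e" and ge: "g e = (\<lambda>i. if i = \<mu> then 1 else 0)"
  shows "in_RK phi (range (\<lambda>x. e * x)) e \<and> top_dim phi (range (\<lambda>x. e * x)) 1 \<and>
         same_loewy_length (UNIV :: 'a set) (range (\<lambda>x. e * x))"
proof -
  let ?B = "range (\<lambda>x. e * x)"
  note RKu = RK[unfolded in_RK_def]
  have U: "UNIV \<in> socle_ideals (UNIV::'a set)" using conjunct1[OF conjunct2[OF conjunct2[OF RKu]]] .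
  have reg0: "\<forall>a\<in>UNIV. \<exists>x\<in>UNIV. a * x * a = (a::'a)" using conjunct1[OF conjunct2[OF RKu]] .
  then have reg: "\<forall>a::'a. \<exists>x. a * x * a = a" by simp
  have layers: "\<forall>I\<in>socle_ideals UNIV. I \<noteq> UNIV \<longrightarrow>
        (\<exists>Lam. Lam \<noteq> {} \<and> layer_iso phi I (soc_succ UNIV I) Lam)"
    using conjunct2[OF conjunct2[OF conjunct2[OF conjunct2[OF RKu]]]] .
  have eI0: "e \<notin> I0"
  proof
    assume "e \<in> I0"
    then have "g e = (\<lambda>i. 0)" using ker by blast
    then have "g e \<mu> = 0" by simp
    then show False using ge by simp
  qed
  have eB: "e \<in> ?B" by (metis mult.right_neutral rangeI)
  have BR: "ideal_in UNIV ?B" using B_ideal_R[OF e] .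
  have I0R: "ideal_in UNIV I0" using socle_ideal_UNIV[OF I0(1)] .
  have UB: "UNIV \<inter> ?B = ?B" by simp
  have sll: "same_loewy_length (UNIV :: 'a set) ?B"
    unfolding same_loewy_length_def
  proof (intro exI[of _ "\<lambda>X. X \<inter> ?B"] conjI ballI)
    show "bij_betw (\<lambda>X. X \<inter> ?B) (socle_ideals UNIV) (socle_ideals ?B)"
      unfolding bij_betw_def
    proof
      show "inj_on (\<lambda>X. X \<inter> ?B) (socle_ideals UNIV)"
      proof (rule inj_onI)
        fix X Y :: "'a set" assume XY: "X \<in> socle_ideals UNIV" "Y \<in> socle_ideals UNIV" "X \<inter> ?B = Y \<inter> ?B"
        show "X = Y"
          using order_reflect[OF e U I0(1) I0(3) eI0 XY(1,2)] order_reflect[OF e U I0(1) I0(3) eI0 XY(2,1)] XY(3)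
          by auto
      qed
      show "(\<lambda>X. X \<inter> ?B) ` socle_ideals UNIV = socle_ideals ?B"
      proof
        show "(\<lambda>X. X \<inter> ?B) ` socle_ideals UNIV \<subseteq> socle_ideals ?B"
          using phi_socle[OF e] by (rule image_subsetI)
        show "socle_ideals ?B \<subseteq> (\<lambda>X. X \<inter> ?B) ` socle_ideals UNIV"
        proof
          fix Y assume "Y \<in> socle_ideals ?B"
          from phi_surj[OF e this] obtain X where "X \<in> socle_ideals UNIV" "Y = X \<inter> ?B" by blast
          then show "Y \<in> (\<lambda>X. X \<inter> ?B) ` socle_ideals UNIV" by (rule rev_image_eqI)
        qed
      qed
    qed
    fix X Y :: "'a set" assume XY: "X \<in> socle_ideals UNIV" "Y \<in> socle_ideals UNIV"
    show "X \<subseteq> Y \<longleftrightarrow> X \<inter> ?B \<subseteq> Y \<inter> ?B"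
      using order_reflect[OF e U I0(1) I0(3) eI0 XY] by auto
  qed
  have succ0: "soc_succ ?B (I0 \<inter> ?B) = ?B" using soc_comm[OF e I0R] I0(3) by simp
  have I0B: "I0 \<inter> ?B \<in> socle_ideals ?B" using phi_socle[OF e I0(1)] .
  have I0ne: "I0 \<inter> ?B \<noteq> ?B" using eI0 eB by blast
  have UR: "ideal_in UNIV (UNIV::'a set)" by (simp add: ideal_in_def)
  have lt: "layer_iso phi (I0 \<inter> ?B) (UNIV \<inter> ?B) {\<nu>. \<exists>y\<in>UNIV \<inter> ?B. g y \<nu> \<noteq> 0}"
    by (rule layer_restrict[OF gU hom scal ker UR e])
  have S1: "{\<nu>. \<exists>y\<in>UNIV \<inter> ?B. g y \<nu> \<noteq> 0} = {\<mu>}"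
  proof
    have "g e \<mu> \<noteq> 0" using ge by simp
    then show "{\<mu>} \<subseteq> {\<nu>. \<exists>y\<in>UNIV \<inter> ?B. g y \<nu> \<noteq> 0}" using eB by blast
    show "{\<nu>. \<exists>y\<in>UNIV \<inter> ?B. g y \<nu> \<noteq> 0} \<subseteq> {\<mu>}"
    proof
      fix \<nu> assume "\<nu> \<in> {\<nu>. \<exists>y\<in>UNIV \<inter> ?B. g y \<nu> \<noteq> 0}"
      then obtain y where y: "y \<in> ?B" "g y \<nu> \<noteq> 0" by auto
      have "g y = g (e * y)" using y(1) inB[OF e] by simp
      also have "\<dots> = (\<lambda>i. g e i * g y i)" using hom by blast
      finally have "g y \<nu> = g e \<nu> * g y \<nu>" by (metis)
      then show "\<nu> \<in> {\<mu>}" using y(2) ge by (cases "\<nu> = \<mu>") auto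
    qed
  qed
  have lt': "layer_iso phi (I0 \<inter> ?B) ?B {\<mu>}" using lt S1 UB by simp
  have "finite {\<mu>} \<and> card {\<mu>} = 1 \<and> layer_iso phi (I0 \<inter> ?B) ?B {\<mu>}" using lt' by simp
  then have "I0 \<inter> ?B \<noteq> ?B \<and> soc_succ ?B (I0 \<inter> ?B) = ?B \<and>
     (\<exists>Lam. finite Lam \<and> card Lam = 1 \<and> layer_iso phi (I0 \<inter> ?B) ?B Lam)"
    using I0ne succ0 by blast
  then have td: "top_dim phi ?B 1"
    unfolding top_dim_def using I0B by (rule_tac bexI)
  have unital: "unital_K_subalgebra phi ?B e"
    unfolding unital_K_subalgebra_def
  proof (intro conjI ballI allI)
    show "0 \<in> ?B" using ideal_zero[OF BR] .
    show "e \<in> ?B" by fact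
    fix x assume x: "x \<in> ?B"
    show "- x \<in> ?B" using ideal_neg[OF BR x] .
    show "e * x = x" using x inB[OF e] by simp
    { fix k show "phi k * x \<in> ?B" using ideal_mul[OF BR _ x] by simp }
    { fix y assume "y \<in> ?B"
      then show "x + y \<in> ?B" "x * y \<in> ?B" using ideal_add[OF BR x] ideal_mul[OF BR _ \<open>y \<in> ?B\<close>, of x] by auto }
  qed
  have regB: "\<forall>a\<in>?B. \<exists>x\<in>?B. a * x * a = a"
  proof
    fix a assume a: "a \<in> ?B"
    obtain x where x: "a * x * a = a" using reg by blast
    have ae: "a * e = a" using a inB[OF e] by (simp add: mult.commute)
    have "a * (e * x) * a = a" using x ae by (metis mult.assoc)
    then show "\<exists>x\<in>?B. a * x * a = a" by blast
  qed
  have BB: "?B \<in> socle_ideals ?B" using phi_socle[OF e U] by simp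
  have layB: "\<forall>I\<in>socle_ideals ?B. I \<noteq> ?B \<longrightarrow>
        (\<exists>Lam. Lam \<noteq> {} \<and> layer_iso phi I (soc_succ ?B I) Lam)"
  proof (intro ballI impI)
    fix I assume I: "I \<in> socle_ideals ?B" "I \<noteq> ?B"
    obtain X where X: "X \<in> socle_ideals UNIV" "I = X \<inter> ?B" using phi_surj[OF e I(1)] by blast
    have XU: "X \<noteq> UNIV" using X I(2) by auto
    have XR: "ideal_in UNIV X" using socle_ideal_UNIV[OF X(1)] .
    have ZR: "ideal_in UNIV (soc_succ UNIV X)" by (rule soc_succ_ideal) (simp_all add: ideal_in_def)
    have sI: "soc_succ ?B I = soc_succ UNIV X \<inter> ?B" using soc_comm[OF e XR] X(2) by simp
    obtain L and gX :: "'a \<Rightarrow> 'a \<Rightarrow> 'k" where gX: "gX ` soc_succ UNIV X = fin_fun L"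
      "\<forall>x\<in>soc_succ UNIV X. \<forall>y\<in>soc_succ UNIV X. gX (x + y) = (\<lambda>i. gX x i + gX y i) \<and> gX (x * y) = (\<lambda>i. gX x i * gX y i)"
      "\<forall>k. \<forall>x\<in>soc_succ UNIV X. gX (phi k * x) = (\<lambda>i. k * gX x i)"
      "{x\<in>soc_succ UNIV X. gX x = (\<lambda>i. 0)} = X"
    proof -
      from layers X(1) XU obtain L where LI: "layer_iso phi X (soc_succ UNIV X) L" by blast
      from LI[unfolded layer_iso_def] obtain gg :: "'a \<Rightarrow> 'a \<Rightarrow> 'k" where
        "gg ` soc_succ UNIV X = fin_fun L"
        "\<forall>x\<in>soc_succ UNIV X. \<forall>y\<in>soc_succ UNIV X. gg (x + y) = (\<lambda>i. gg x i + gg y i) \<and> gg (x * y) = (\<lambda>i. gg x i * gg y i)"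
        "\<forall>k. \<forall>x\<in>soc_succ UNIV X. gg (phi k * x) = (\<lambda>i. k * gg x i)"
        "{x\<in>soc_succ UNIV X. gg x = (\<lambda>i. 0)} = X"
        by (elim exE conjE)
      then show ?thesis by (rule that)
    qed
    let ?S = "{\<nu>. \<exists>y\<in>soc_succ UNIV X \<inter> ?B. gX y \<nu> \<noteq> 0}"
    have li: "layer_iso phi (X \<inter> ?B) (soc_succ UNIV X \<inter> ?B) ?S"
      by (rule layer_restrict[OF gX ZR e])
    have Sne: "?S \<noteq> {}"
    proof
      assume "?S = {}"
      have "soc_succ UNIV X \<inter> ?B \<subseteq> X \<inter> ?B"
      proof
        fix y assume y: "y \<in> soc_succ UNIV X \<inter> ?B"
        have "gX y = (\<lambda>i. 0)"
        proof (rule ext)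
          fix i
          have "i \<notin> ?S" using \<open>?S = {}\<close> by (simp only: empty_iff not_False_eq_True)
          then show "gX y i = 0" using y by blast
        qed
        then have "y \<in> {x\<in>soc_succ UNIV X. gX x = (\<lambda>i. 0)}" using y by simp
        then show "y \<in> X \<inter> ?B" using gX(4) y by simp
      qed
      moreover have "X \<inter> ?B \<subseteq> soc_succ UNIV X \<inter> ?B" using soc_succ_sup[of X UNIV] by auto
      ultimately show False using strict_layer[OF e U I0(1) I0(3) eI0 X(1) XU] by auto
    qed
    have LIx: "layer_iso phi I (soc_succ ?B I) ?S" unfolding X(2) soc_comm[OF e XR] by (rule li)
    show "\<exists>Lam. Lam \<noteq> {} \<and> layer_iso phi I (soc_succ ?B I) Lam" by (rule exI[of _ ?S], rule conjI[OF Sne LIx])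
  qed
  have ex0: "\<exists>I\<in>socle_ideals ?B. I \<noteq> ?B \<and> soc_succ ?B I = ?B"
    using I0B I0ne succ0 by (intro bexI[of _ "I0 \<inter> ?B"] conjI)
  have "in_RK phi ?B e"
    unfolding in_RK_def by (rule conjI[OF unital conjI[OF regB conjI[OF BB conjI[OF ex0 layB]]]])
  then show ?thesis using td sll by (intro conjI)
qed


lemma g_facts:
  fixes g :: "'a::comm_ring_1 \<Rightarrow> 'b \<Rightarrow> 'k::field"
  assumes gU: "g ` UNIV = fin_fun Lam"
    and hom: "\<forall>x\<in>UNIV. \<forall>y\<in>UNIV. g (x + y) = (\<lambda>i. g x i + g y i) \<and> g (x * y) = (\<lambda>i. g x i * g y i)"
  shows "g 0 = (\<lambda>i. 0)" and "g (- x) = (\<lambda>i. - g x i)"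
    and "g 1 = (\<lambda>i. if i \<in> Lam then 1 else 0)"
proof -
  show g0: "g 0 = (\<lambda>i. 0)"
  proof
    fix i
    have "g (0 + 0) = (\<lambda>i. g 0 i + g 0 i)" using hom by blast
    then have "g 0 i = g 0 i + g 0 i" by (metis add_0)
    then show "g 0 i = 0" by (metis add_cancel_right_right)
  qed
  show "g (- x) = (\<lambda>i. - g x i)"
  proof
    fix i
    have "g (x + - x) = (\<lambda>i. g x i + g (- x) i)" using hom by blast
    then have "0 = g x i + g (- x) i" using g0 by (metis add.right_inverse)
    then show "g (- x) i = - g x i" by (metis add.commute add_eq_0_iff2 minus_unique)
  qed
  show "g 1 = (\<lambda>i. if i \<in> Lam then 1 else 0)"
  proof
    fix i
    show "g 1 i = (if i \<in> Lam then 1 else 0)"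
    proof (cases "i \<in> Lam")
      case True
      let ?d = "\<lambda>j. if j = i then (1::'k) else 0"
      have "finite {j. ?d j \<noteq> 0}" by simp
      then have "?d \<in> fin_fun Lam" unfolding fin_fun_def using True by auto
      then obtain x where x: "g x = ?d" using gU by (metis imageE)
      have "g (1 * x) = (\<lambda>j. g 1 j * g x j)" using hom by blast
      then have "g x i = g 1 i * g x i" by (metis mult_1)
      then show ?thesis using x True by simp
    next
      case False
      have "g 1 \<in> fin_fun Lam" using gU by blast
      then show ?thesis using False unfolding fin_fun_def by simp
    qed
  qed
qed

lemma lift_idem:
  fixes g :: "'a::comm_ring_1 \<Rightarrow> 'b \<Rightarrow> 'k::field"
  assumes gU: "g ` UNIV = fin_fun Lam"
    and hom: "\<forall>x\<in>UNIV. \<forall>y\<in>UNIV. g (x + y) = (\<lambda>i. g x i + g y i) \<and> g (x * y) = (\<lambda>i. g x i * g y i)"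
    and reg: "\<forall>a::'a. \<exists>x. a * x * a = a" and mu: "\<mu> \<in> Lam"
  shows "\<exists>\<epsilon>. \<epsilon> * \<epsilon> = \<epsilon> \<and> g \<epsilon> = (\<lambda>i. if i = \<mu> then 1 else 0)"
proof -
  let ?d = "\<lambda>j. if j = \<mu> then (1::'k) else 0"
  have "finite {j. ?d j \<noteq> 0}" by simp
  then have "?d \<in> fin_fun Lam" unfolding fin_fun_def using mu by auto
  then obtain a where a: "g a = ?d" using gU by (metis imageE)
  obtain x where x: "a * x * a = a" using reg by blast
  have gm: "g (u * v) = (\<lambda>i. g u i * g v i)" for u v using hom by blast
  have "g (a * x * a) = (\<lambda>i. g a i * g x i * g a i)" using gm by simp
  then have "g a \<mu> = g a \<mu> * g x \<mu> * g a \<mu>" using x by metis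
  then have gx: "g x \<mu> = 1" using a by simp
  have "(a * x) * (a * x) = a * x" using x by (metis mult.assoc)
  moreover have "g (a * x) = ?d" using gm a gx by auto
  ultimately show ?thesis by blast
qed

lemma telescope:
  fixes E :: "nat \<Rightarrow> 'a::comm_ring_1"
  shows "(\<Sum>i<m. E i * (\<Prod>j<i. (1 - E j))) + (\<Prod>j<m. (1 - E j)) = 1"
proof (induction m)
  case 0 then show ?case by simp
next
  case (Suc m)
  have "(\<Sum>i<Suc m. E i * (\<Prod>j<i. (1 - E j))) + (\<Prod>j<Suc m. (1 - E j))
      = (\<Sum>i<m. E i * (\<Prod>j<i. (1 - E j))) + E m * (\<Prod>j<m. (1 - E j)) + (\<Prod>j<m. (1 - E j)) * (1 - E m)"
    by simp
  also have "\<dots> = (\<Sum>i<m. E i * (\<Prod>j<i. (1 - E j))) + (\<Prod>j<m. (1 - E j))"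
    by (simp add: algebra_simps)
  finally show ?case using Suc by simp
qed

lemma prod_idem:
  fixes E :: "nat \<Rightarrow> 'a::comm_ring_1"
  assumes "\<forall>j<m. E j * E j = E j"
  shows "(\<Prod>j<m. (1 - E j)) * (\<Prod>j<m. (1 - E j)) = (\<Prod>j<m. (1 - E j))"
  using assms
proof (induction m)
  case 0 then show ?case by simp
next
  case (Suc m)
  let ?P = "\<Prod>j<m. (1 - E j)"
  have P: "?P * ?P = ?P" using Suc by simp
  have Em: "E m * E m = E m" using Suc.prems by simp
  have "(?P * (1 - E m)) * (?P * (1 - E m)) = (?P * ?P) * ((1 - E m) * (1 - E m))"
    by (simp add: algebra_simps)
  also have "(1 - E m) * (1 - E m) = 1 - E m" using Em by (simp add: algebra_simps)
  finally show ?case using P by simp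
qed

lemma prod_factor:
  fixes E :: "nat \<Rightarrow> 'a::comm_ring_1"
  assumes "j < m"
  shows "\<exists>q. (\<Prod>k<m. (1 - E k)) = (1 - E j) * q"
  using prod.remove[of "{..<m}" j "\<lambda>k. 1 - E k"] assms by auto

lemma g_prod:
  fixes g :: "'a::comm_ring_1 \<Rightarrow> 'b \<Rightarrow> 'k::field" and E :: "nat \<Rightarrow> 'a"
  assumes gU: "g ` UNIV = fin_fun Lam"
    and hom: "\<forall>x\<in>UNIV. \<forall>y\<in>UNIV. g (x + y) = (\<lambda>i. g x i + g y i) \<and> g (x * y) = (\<lambda>i. g x i * g y i)"
    and gE: "\<forall>j<m. g (E j) = (\<lambda>i. if i = l j then 1 else 0)" and lL: "\<forall>j<m. l j \<in> Lam"
  shows "g (\<Prod>j<m. (1 - E j)) = (\<lambda>i. if i \<in> Lam \<and> i \<notin> l ` {..<m} then 1 else 0)"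
  using gE lL
proof (induction m)
  case 0 then show ?case using g_facts(3)[OF gU hom] by simp
next
  case (Suc m)
  have IH: "g (\<Prod>j<m. (1 - E j)) = (\<lambda>i. if i \<in> Lam \<and> i \<notin> l ` {..<m} then 1 else 0)"
    using Suc by simp
  have gm: "g (u * v) = (\<lambda>i. g u i * g v i)" for u v using hom by blast
  have ga: "g (u + v) = (\<lambda>i. g u i + g v i)" for u v using hom by blast
  have "g (1 - E m) = (\<lambda>i. g 1 i + g (- E m) i)" using ga[of 1 "- E m"] by simp
  also have "\<dots> = (\<lambda>i. (if i \<in> Lam then 1 else 0) - (if i = l m then 1 else 0))"
    using g_facts(2,3)[OF gU hom] Suc.prems by simp
  finally have g1E: "g (1 - E m) = \<dots>" .
  show ?case
  proof
    fix i
    have "g (\<Prod>j<Suc m. (1 - E j)) i = g (\<Prod>j<m. (1 - E j)) i * g (1 - E m) i"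
      using gm by simp
    also have "\<dots> = (if i \<in> Lam \<and> i \<notin> l ` {..<Suc m} then 1 else 0)"
      using IH g1E Suc.prems by (auto simp: lessThan_Suc)
    finally show "g (\<Prod>j<Suc m. (1 - E j)) i = (if i \<in> Lam \<and> i \<notin> l ` {..<Suc m} then 1 else 0)" .
  qed
qed


theorem lemma3p9:
  fixes phi :: "'k::field \<Rightarrow> 'a::comm_ring_1" and n :: nat
  assumes "ring_hom_K phi"
    and "in_RK phi (UNIV :: 'a set) 1"
    and "top_dim phi (UNIV :: 'a set) n"
  shows "\<exists>e :: nat \<Rightarrow> 'a.
     (\<forall>i<n. e i * e i = e i) \<and>
     (\<forall>i<n. \<forall>j<n. i \<noteq> j \<longrightarrow> e i * e j = 0) \<and>
     (\<Sum>i<n. e i) = 1 \<and>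
     (\<forall>i<n. in_RK phi (range (\<lambda>x. e i * x)) (e i) \<and>
            top_dim phi (range (\<lambda>x. e i * x)) 1 \<and>
            same_loewy_length (UNIV :: 'a set) (range (\<lambda>x. e i * x)))"
proof -
  note RK = assms(2)
  note RKu = RK[unfolded in_RK_def]
  have reg0: "\<forall>a\<in>UNIV. \<exists>x\<in>UNIV. a * x * a = (a::'a)" using conjunct1[OF conjunct2[OF RKu]] .
  then have reg: "\<forall>a::'a. \<exists>x. a * x * a = a" by simp
  from assms(3) obtain I0 Lam where I0: "I0 \<in> socle_ideals UNIV" "I0 \<noteq> UNIV" "soc_succ UNIV I0 = UNIV"
    and L: "finite Lam" "card Lam = n" "layer_iso phi I0 UNIV Lam"
    unfolding top_dim_def by blast
  from L(3)[unfolded layer_iso_def] obtain g :: "'a \<Rightarrow> 'a \<Rightarrow> 'k" where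
    gU: "g ` UNIV = fin_fun Lam"
    and hom: "\<forall>x\<in>UNIV. \<forall>y\<in>UNIV. g (x + y) = (\<lambda>i. g x i + g y i) \<and> g (x * y) = (\<lambda>i. g x i * g y i)"
    and scal: "\<forall>k. \<forall>x\<in>UNIV. g (phi k * x) = (\<lambda>i. k * g x i)"
    and ker: "{x\<in>UNIV. g x = (\<lambda>i. 0)} = I0"
    by (elim exE conjE)
  have gm: "g (u * v) = (\<lambda>i. g u i * g v i)" for u v using hom by blast
  have n1: "n \<noteq> 0"
  proof
    assume "n = 0"
    then have "Lam = {}" using L by simp
    then have "g x = (\<lambda>i. 0)" for x
    proof -
      have "g x \<in> fin_fun Lam" using gU by blast
      then show ?thesis using \<open>Lam = {}\<close> unfolding fin_fun_def by auto
    qed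
    then have "I0 = UNIV" using ker by auto
    then show False using I0(2) by simp
  qed
  obtain l where l: "bij_betw l {0..<n} Lam" using ex_bij_betw_nat_finite[OF L(1)] L(2) by auto
  have lL: "\<forall>j<n. l j \<in> Lam" using l unfolding bij_betw_def by auto
  have linj: "inj_on l {..<n}" using l unfolding bij_betw_def by (simp add: atLeast0LessThan)
  have limg: "l ` {..<n} = Lam" using l unfolding bij_betw_def by (simp add: atLeast0LessThan)
  have "\<forall>i. \<exists>\<epsilon>. i < n \<longrightarrow> \<epsilon> * \<epsilon> = \<epsilon> \<and> g \<epsilon> = (\<lambda>j. if j = l i then 1 else 0)"
    using lift_idem[OF gU hom reg] lL by blast
  from choice[OF this] obtain E where
    E: "\<forall>i. i < n \<longrightarrow> E i * E i = E i \<and> g (E i) = (\<lambda>j. if j = l i then 1 else 0)" by blast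
  define P where "P m = (\<Prod>j<m. (1 - E j))" for m
  define e where "e i = (if i < n - 1 then E i * P i else P (n - 1))" for i
  have Pidem: "P m * P m = P m" if "m \<le> n" for m
    unfolding P_def by (rule prod_idem) (use E that in auto)
  have gP: "g (P m) = (\<lambda>i. if i \<in> Lam \<and> i \<notin> l ` {..<m} then 1 else 0)" if "m \<le> n" for m
    unfolding P_def by (rule g_prod[OF gU hom]) (use E lL that in auto)
  have eidem: "e i * e i = e i" if "i < n" for i
  proof (cases "i < n - 1")
    case True
    have "e i * e i = (E i * E i) * (P i * P i)" using True unfolding e_def by (simp add: algebra_simps)
    also have "\<dots> = E i * P i" using E that Pidem[of i] by simp
    finally show ?thesis using True unfolding e_def by simp
  next
    case False then show ?thesis unfolding e_def using Pidem[of "n - 1"] by simp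
  qed
  have orth: "e j * e i = 0" if ji: "j < i" "i < n" for i j
  proof -
    have jn: "j < n - 1" using ji by arith
    have ej: "e j = E j * P j" using jn unfolding e_def by simp
    have "\<exists>q. e i = (1 - E j) * q"
    proof (cases "i < n - 1")
      case True
      obtain q where "P i = (1 - E j) * q" using prod_factor[OF ji(1)] unfolding P_def by blast
      then have "e i = E i * ((1 - E j) * q)" using True unfolding e_def by simp
      then have "e i = (1 - E j) * (E i * q)" by (simp add: mult.left_commute)
      then show ?thesis by blast
    next
      case False
      then have "j < n - 1" using ji by simp
      from prod_factor[OF this] obtain q where "P (n - 1) = (1 - E j) * q" unfolding P_def by blast
      then show ?thesis using False unfolding e_def by auto
    qed
    then obtain q where q: "e i = (1 - E j) * q" by blast
    have Ej: "E j * E j = E j" using E ji by simp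
    have "e j * e i = (E j * P j) * ((1 - E j) * q)" unfolding ej q ..
    also have "\<dots> = (E j - E j * E j) * (P j * q)" by (simp add: algebra_simps)
    finally have "e j * e i = (E j - E j * E j) * (P j * q)" .
    then show ?thesis using Ej by simp
  qed
  have orth2: "\<forall>i<n. \<forall>j<n. i \<noteq> j \<longrightarrow> e i * e j = 0"
  proof (intro allI impI)
    fix i j assume "i < n" "j < n" "i \<noteq> j"
    then consider "j < i" | "i < j" by linarith
    then show "e i * e j = 0"
    proof cases
      case 1 then show ?thesis using orth[of j i] \<open>i < n\<close> by (simp add: mult.commute)
    next
      case 2 then show ?thesis using orth[of i j] \<open>j < n\<close> by simp
    qed
  qed
  have sum1: "(\<Sum>i<n. e i) = 1"
  proof -
    obtain m where m: "n = Suc m" using n1 not0_implies_Suc by blast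
    have "(\<Sum>i<n. e i) = (\<Sum>i<m. e i) + e m" using m by simp
    also have "(\<Sum>i<m. e i) = (\<Sum>i<m. E i * (\<Prod>j<i. (1 - E j)))"
      using m unfolding e_def P_def by (intro sum.cong) auto
    also have "e m = (\<Prod>j<m. (1 - E j))" using m unfolding e_def P_def by simp
    finally show ?thesis using telescope[of E m] by simp
  qed
  have ge: "g (e i) = (\<lambda>j. if j = l i then 1 else 0)" if "i < n" for i
  proof (cases "i < n - 1")
    case True
    have li1: "l i \<in> Lam" using lL that by blast
    have "{..<i} \<subseteq> {..<n}" using that by auto
    then have "l i \<in> l ` {..<i} \<longleftrightarrow> i \<in> {..<i}"
      using inj_on_image_mem_iff[OF linj, of i "{..<i}"] that by simp
    then have li: "l i \<in> Lam" "l i \<notin> l ` {..<i}" using li1 by auto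
    have "g (e i) = (\<lambda>j. g (E i) j * g (P i) j)" using True gm unfolding e_def by simp
    also have "\<dots> = (\<lambda>j. if j = l i then 1 else 0)"
      using E that gP[of i] li by auto
    finally show ?thesis .
  next
    case False
    then have i: "i = n - 1" using that by simp
    have "g (e i) = g (P (n - 1))" using False unfolding e_def by simp
    also have "\<dots> = (\<lambda>j. if j \<in> Lam \<and> j \<notin> l ` {..<n - 1} then 1 else 0)" using gP by simp
    also have "\<dots> = (\<lambda>j. if j = l i then 1 else 0)"
    proof
      fix j
      have "{..<n} = insert (n - 1) {..<n - 1}" using n1 by auto
      then have Lm: "Lam = insert (l (n - 1)) (l ` {..<n - 1})" using limg by auto
      have "{..<n - 1} \<subseteq> {..<n}" by auto
      moreover have "n - 1 \<in> {..<n}" using n1 by simp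
      ultimately have "l (n - 1) \<in> l ` {..<n - 1} \<longleftrightarrow> n - 1 \<in> {..<n - 1}"
        using inj_on_image_mem_iff[OF linj] by blast
      then have "l (n - 1) \<notin> l ` {..<n - 1}" by simp
      then show "(if j \<in> Lam \<and> j \<notin> l ` {..<n - 1} then 1 else 0) = (if j = l i then (1::'k) else 0)"
        using Lm i by auto
    qed
    finally show ?thesis .
  qed
  have blocks: "\<forall>i<n. in_RK phi (range (\<lambda>x. e i * x)) (e i) \<and>
            top_dim phi (range (\<lambda>x. e i * x)) 1 \<and>
            same_loewy_length (UNIV :: 'a set) (range (\<lambda>x. e i * x))"
  proof (intro allI impI)
    fix i assume i: "i < n"
    show "in_RK phi (range (\<lambda>x. e i * x)) (e i) \<and>
            top_dim phi (range (\<lambda>x. e i * x)) 1 \<and>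
            same_loewy_length (UNIV :: 'a set) (range (\<lambda>x. e i * x))"
      by (rule block_props[OF RK I0 gU hom scal ker eidem[OF i] ge[OF i]])
  qed
  show ?thesis
    using eidem orth2 sum1 blocks by blast
qed

end
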